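(* Let $S,T,V$ be ordered trees and let $f\colon T\to S$ and $g\colon V\to T$ be rigid surjections. Then $f\circ g\colon V\to S$ is a rigid surjection. Moreover, if $d\colon S\to T$ is the injection of $f$ and $e\colon T\to V$ is the injection of $g$, then $e\circ d$ is the injection of $f\circ g$.
   Context: A tree is a finite, non-empty partially ordered set $(T,\sqsubseteq_T)$ with a smallest element (the root) such that the set of predecessors of each element is linearly ordered; each node counts as its own predecessor and successor. For $v,w\in T$, $v\wedge_T w$ is the $\sqsubseteq_T$-largest common predecessor of $v$ and $w$. A tree is ordered if the set of immediate successors of each node carries a fixed linear order; this induces the lexicographic linear order $\leq_T$ on $T$: $v\leq_T w$ if $v\sqsubseteq_T w$, and for $\sqsubseteq_T$-incomparable $v,w$, $v\leq_T w$ iff the immediate successor of $v\wedge_T w$ below $v$ precedes the one below $w$. A morphism $e\colon S\to T$ of ordered trees satisfies $e(v\wedge_S w)=e(v)\wedge_T e(w)$, is monotone from $\leq_S$ to $\leq_T$, and maps root to root. A function $f\colon T\to S$ is a rigid surjection if there is a morphism $e\colon S\to T$ with $f\circ e={\rm id}_S$ and $e(f(w))\sqsubseteq_T w$ for all $w\in T$; such $e$ is unique and is called the injection of $f$. *)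

theory Defs
  imports Main
begin

text \<open>An ordered tree: a carrier set, the tree order (v below w = v is a predecessor of w),
  and a relation ordering siblings (immediate successors of a common node).\<close>
record 'a otree =
  carrier :: "'a set"
  tle :: "'a \<Rightarrow> 'a \<Rightarrow> bool"
  sib :: "'a \<Rightarrow> 'a \<Rightarrow> bool"

definition is_tree :: "'a otree \<Rightarrow> bool" where
  "is_tree T \<longleftrightarrow>
     finite (carrier T) \<and> carrier T \<noteq> {} \<and>
     (\<forall>x\<in>carrier T. tle T x x) \<and>
     (\<forall>x\<in>carrier T. \<forall>y\<in>carrier T. tle T x y \<and> tle T y x \<longrightarrow> x = y) \<and>
     (\<forall>x\<in>carrier T. \<forall>y\<in>carrier T. \<forall>z\<in>carrier T. tle T x y \<and> tle T y z \<longrightarrow> tle T x z) \<and>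
     (\<exists>r\<in>carrier T. \<forall>v\<in>carrier T. tle T r v) \<and>
     (\<forall>v\<in>carrier T. \<forall>x\<in>carrier T. \<forall>y\<in>carrier T.
        tle T x v \<and> tle T y v \<longrightarrow> tle T x y \<or> tle T y x)"

definition tree_root :: "'a otree \<Rightarrow> 'a" where
  "tree_root T = (THE r. r \<in> carrier T \<and> (\<forall>v\<in>carrier T. tle T r v))"

definition imm_succ :: "'a otree \<Rightarrow> 'a \<Rightarrow> 'a \<Rightarrow> bool" where
  "imm_succ T v w \<longleftrightarrow> v \<in> carrier T \<and> w \<in> carrier T \<and> tle T v w \<and> v \<noteq> w \<and>
     \<not> (\<exists>u\<in>carrier T. tle T v u \<and> tle T u w \<and> u \<noteq> v \<and> u \<noteq> w)"

definition ordered_tree :: "'a otree \<Rightarrow> bool" where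
  "ordered_tree T \<longleftrightarrow> is_tree T \<and>
     (\<forall>v\<in>carrier T. let C = {w. imm_succ T v w} in
        (\<forall>x\<in>C. sib T x x) \<and>
        (\<forall>x\<in>C. \<forall>y\<in>C. sib T x y \<and> sib T y x \<longrightarrow> x = y) \<and>
        (\<forall>x\<in>C. \<forall>y\<in>C. \<forall>z\<in>C. sib T x y \<and> sib T y z \<longrightarrow> sib T x z) \<and>
        (\<forall>x\<in>C. \<forall>y\<in>C. sib T x y \<or> sib T y x))"

definition tmeet :: "'a otree \<Rightarrow> 'a \<Rightarrow> 'a \<Rightarrow> 'a" where
  "tmeet T v w = (THE u. u \<in> carrier T \<and> tle T u v \<and> tle T u w \<and>
      (\<forall>u'\<in>carrier T. tle T u' v \<and> tle T u' w \<longrightarrow> tle T u' u))"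

definition child_towards :: "'a otree \<Rightarrow> 'a \<Rightarrow> 'a \<Rightarrow> 'a" where
  "child_towards T u v = (THE c. imm_succ T u c \<and> tle T c v)"

definition lexle :: "'a otree \<Rightarrow> 'a \<Rightarrow> 'a \<Rightarrow> bool" where
  "lexle T v w \<longleftrightarrow> tle T v w \<or>
     (\<not> tle T v w \<and> \<not> tle T w v \<and>
      sib T (child_towards T (tmeet T v w) v) (child_towards T (tmeet T v w) w))"

definition tree_morphism :: "('a \<Rightarrow> 'b) \<Rightarrow> 'a otree \<Rightarrow> 'b otree \<Rightarrow> bool" where
  "tree_morphism e S T \<longleftrightarrow>
     (\<forall>v\<in>carrier S. e v \<in> carrier T) \<and>
     (\<forall>v\<in>carrier S. \<forall>w\<in>carrier S. e (tmeet S v w) = tmeet T (e v) (e w)) \<and>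
     (\<forall>v\<in>carrier S. \<forall>w\<in>carrier S. lexle S v w \<longrightarrow> lexle T (e v) (e w)) \<and>
     e (tree_root S) = tree_root T"

definition is_injection_of :: "('a \<Rightarrow> 'b) \<Rightarrow> 'a otree \<Rightarrow> 'b otree \<Rightarrow> ('b \<Rightarrow> 'a) \<Rightarrow> bool" where
  "is_injection_of f T S e \<longleftrightarrow> tree_morphism e S T \<and>
     (\<forall>s\<in>carrier S. f (e s) = s) \<and>
     (\<forall>w\<in>carrier T. tle T (e (f w)) w)"

definition rigid_surj :: "('a \<Rightarrow> 'b) \<Rightarrow> 'a otree \<Rightarrow> 'b otree \<Rightarrow> bool" where
  "rigid_surj f T S \<longleftrightarrow> (\<forall>w\<in>carrier T. f w \<in> carrier S) \<and> (\<exists>e. is_injection_of f T S e)"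

end

theory Submission
  imports Defs
begin

lemma chain_max:
  assumes "finite C" "C \<noteq> {}"
    and "\<forall>x\<in>C. \<forall>y\<in>C. R x y \<or> R y x"
    and "\<forall>x\<in>C. \<forall>y\<in>C. \<forall>z\<in>C. R x y \<and> R y z \<longrightarrow> R x z"
  shows "\<exists>m\<in>C. \<forall>u\<in>C. R u m"
  using assms
proof (induction C rule: finite_ne_induct)
  case (singleton x)
  have "R x x" using singleton.prems(1) by blast
  then show ?case by blast
next
  case (insert x F)
  have l: "\<forall>a\<in>F. \<forall>b\<in>F. R a b \<or> R b a" using insert.prems(1) by blast
  have t: "\<forall>a\<in>F. \<forall>b\<in>F. \<forall>c\<in>F. R a b \<and> R b c \<longrightarrow> R a c" using insert.prems(2) by blast
  obtain m where m: "m \<in> F" "\<forall>u\<in>F. R u m" using insert.IH[OF l t] by blast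
  have xx: "R x x" using insert.prems(1) by blast
  show ?case
  proof (cases "R x m")
    case True
    have "\<forall>u\<in>insert x F. R u m" using True m(2) by blast
    then show ?thesis using m(1) by blast
  next
    case False
    then have mx: "R m x" using insert.prems(1) m(1) by blast
    have "\<forall>u\<in>F. R u x"
    proof
      fix u assume u: "u \<in> F"
      have "R u m" using m(2) u by blast
      then show "R u x" using insert.prems(2) u m(1) mx by blast
    qed
    then have "\<forall>u\<in>insert x F. R u x" using xx by blast
    then show ?thesis by blast
  qed
qed

lemma tree_parts:
  assumes "is_tree T"
  shows "finite (carrier T)" "\<forall>x\<in>carrier T. tle T x x"
    "\<forall>x\<in>carrier T. \<forall>y\<in>carrier T. tle T x y \<and> tle T y x \<longrightarrow> x = y"
    "\<forall>x\<in>carrier T. \<forall>y\<in>carrier T. \<forall>z\<in>carrier T. tle T x y \<and> tle T y z \<longrightarrow> tle T x z"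
    "\<exists>r\<in>carrier T. \<forall>v\<in>carrier T. tle T r v"
    "\<forall>v\<in>carrier T. \<forall>x\<in>carrier T. \<forall>y\<in>carrier T. tle T x v \<and> tle T y v \<longrightarrow> tle T x y \<or> tle T y x"
proof -
  note h = assms[unfolded is_tree_def]
  show "finite (carrier T)" using h by (rule conjunct1)
  show "\<forall>x\<in>carrier T. tle T x x" using h[THEN conjunct2, THEN conjunct2] by (rule conjunct1)
  show "\<forall>x\<in>carrier T. \<forall>y\<in>carrier T. tle T x y \<and> tle T y x \<longrightarrow> x = y"
    using h[THEN conjunct2, THEN conjunct2, THEN conjunct2] by (rule conjunct1)
  show "\<forall>x\<in>carrier T. \<forall>y\<in>carrier T. \<forall>z\<in>carrier T. tle T x y \<and> tle T y z \<longrightarrow> tle T x z"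
    using h[THEN conjunct2, THEN conjunct2, THEN conjunct2, THEN conjunct2] by (rule conjunct1)
  show "\<exists>r\<in>carrier T. \<forall>v\<in>carrier T. tle T r v"
    using h[THEN conjunct2, THEN conjunct2, THEN conjunct2, THEN conjunct2, THEN conjunct2] by (rule conjunct1)
  show "\<forall>v\<in>carrier T. \<forall>x\<in>carrier T. \<forall>y\<in>carrier T. tle T x v \<and> tle T y v \<longrightarrow> tle T x y \<or> tle T y x"
    using h[THEN conjunct2, THEN conjunct2, THEN conjunct2, THEN conjunct2, THEN conjunct2] by (rule conjunct2)
qed

lemma tree_refl: "is_tree T \<Longrightarrow> x \<in> carrier T \<Longrightarrow> tle T x x"
  using tree_parts(2) by (rule bspec)
lemma tree_antisym: "is_tree T \<Longrightarrow> x \<in> carrier T \<Longrightarrow> y \<in> carrier T \<Longrightarrow> tle T x y \<Longrightarrow> tle T y x \<Longrightarrow> x = y"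
  using tree_parts(3)[of T] by (meson)
lemma tree_trans: "is_tree T \<Longrightarrow> x \<in> carrier T \<Longrightarrow> y \<in> carrier T \<Longrightarrow> z \<in> carrier T \<Longrightarrow> tle T x y \<Longrightarrow> tle T y z \<Longrightarrow> tle T x z"
  using tree_parts(4) by blast
lemma tree_lin: "is_tree T \<Longrightarrow> v \<in> carrier T \<Longrightarrow> x \<in> carrier T \<Longrightarrow> y \<in> carrier T \<Longrightarrow> tle T x v \<Longrightarrow> tle T y v \<Longrightarrow> tle T x y \<or> tle T y x"
  using tree_parts(6) by blast
lemma tree_root_ex: "is_tree T \<Longrightarrow> \<exists>r\<in>carrier T. \<forall>v\<in>carrier T. tle T r v"
  using tree_parts(5) by blast
lemma tree_fin: "is_tree T \<Longrightarrow> finite (carrier T)"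
  using tree_parts(1) by blast

lemma meet_spec:
  assumes "is_tree T" "x \<in> carrier T" "y \<in> carrier T"
  shows "tmeet T x y \<in> carrier T \<and> tle T (tmeet T x y) x \<and> tle T (tmeet T x y) y \<and>
      (\<forall>u'\<in>carrier T. tle T u' x \<and> tle T u' y \<longrightarrow> tle T u' (tmeet T x y))"
proof -
  let ?C = "{u\<in>carrier T. tle T u x \<and> tle T u y}"
  have fin: "finite ?C" using tree_fin[OF assms(1)] by auto
  obtain r where r: "r \<in> carrier T" "\<forall>v\<in>carrier T. tle T r v" using tree_root_ex[OF assms(1)] by blast
  have ne: "?C \<noteq> {}" using r assms by auto
  have lin: "\<forall>a\<in>?C. \<forall>b\<in>?C. tle T a b \<or> tle T b a" using tree_lin[OF assms(1,2)] by blast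
  have tr: "\<forall>a\<in>?C. \<forall>b\<in>?C. \<forall>c\<in>?C. tle T a b \<and> tle T b c \<longrightarrow> tle T a c" using tree_trans[OF assms(1)] by blast
  obtain m where m: "m \<in> ?C" "\<forall>u\<in>?C. tle T u m" using chain_max[OF fin ne lin tr] by blast
  have ex: "m \<in> carrier T \<and> tle T m x \<and> tle T m y \<and> (\<forall>u'\<in>carrier T. tle T u' x \<and> tle T u' y \<longrightarrow> tle T u' m)"
    using m by auto
  have "tmeet T x y = m"
    unfolding tmeet_def
  proof (rule the_equality)
    show "m \<in> carrier T \<and> tle T m x \<and> tle T m y \<and> (\<forall>u'\<in>carrier T. tle T u' x \<and> tle T u' y \<longrightarrow> tle T u' m)" by (rule ex)
  next
    fix u assume u: "u \<in> carrier T \<and> tle T u x \<and> tle T u y \<and> (\<forall>u'\<in>carrier T. tle T u' x \<and> tle T u' y \<longrightarrow> tle T u' u)"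
    then have "tle T u m" "tle T m u" using ex by auto
    then show "u = m" using u ex tree_antisym[OF assms(1)] by blast
  qed
  then show ?thesis using ex by simp
qed

lemma morph_mono:
  assumes "ordered_tree S" "ordered_tree T" "tree_morphism e S T"
    "a \<in> carrier S" "b \<in> carrier S" "tle S a b"
  shows "tle T (e a) (e b)"
proof -
  have tS: "is_tree S" and tT: "is_tree T" using assms ordered_tree_def by auto
  have ms: "tmeet S a b = a"
  proof -
    have sp: "tmeet S a b \<in> carrier S \<and> tle S (tmeet S a b) a \<and> tle S (tmeet S a b) b \<and>
      (\<forall>u'\<in>carrier S. tle S u' a \<and> tle S u' b \<longrightarrow> tle S u' (tmeet S a b))"
      by (rule meet_spec[OF tS assms(4,5)])
    have "tle S a a" using tree_refl[OF tS assms(4)] .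
    then have "tle S a (tmeet S a b)" using sp assms by blast
    then show ?thesis using sp tree_antisym[OF tS] assms(4) by blast
  qed
  have "e (tmeet S a b) = tmeet T (e a) (e b)" using assms(3-5) unfolding tree_morphism_def by blast
  then have "tmeet T (e a) (e b) = e a" using ms by simp
  moreover have "e a \<in> carrier T" "e b \<in> carrier T" using assms(3-5) unfolding tree_morphism_def by auto
  ultimately show ?thesis using meet_spec[OF tT] by metis
qed

lemma morph_comp:
  assumes "tree_morphism d S T" "tree_morphism e T V"
  shows "tree_morphism (e \<circ> d) S V"
  using assms unfolding tree_morphism_def by auto

lemma inj_comp:
  assumes "ordered_tree S" "ordered_tree T" "ordered_tree V"
    "\<forall>w\<in>carrier T. f w \<in> carrier S" "\<forall>w\<in>carrier V. g w \<in> carrier T"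
    "is_injection_of f T S d" "is_injection_of g V T e"
  shows "is_injection_of (f \<circ> g) V S (e \<circ> d)"
proof -
  have md: "tree_morphism d S T" and me: "tree_morphism e T V" using assms(6,7) is_injection_of_def by auto
  have tV: "is_tree V" using assms(3) ordered_tree_def by auto
  have "\<forall>s\<in>carrier S. (f \<circ> g) ((e \<circ> d) s) = s"
  proof
    fix s assume s: "s \<in> carrier S"
    have ds: "d s \<in> carrier T" using md s unfolding tree_morphism_def by blast
    have "g (e (d s)) = d s" using assms(7) ds unfolding is_injection_of_def by blast
    moreover have "f (d s) = s" using assms(6) s unfolding is_injection_of_def by blast
    ultimately show "(f \<circ> g) ((e \<circ> d) s) = s" by simp
  qed
  moreover have "\<forall>w\<in>carrier V. tle V ((e \<circ> d) ((f \<circ> g) w)) w"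
  proof
    fix w assume w: "w \<in> carrier V"
    have gw: "g w \<in> carrier T" using assms(5) w by auto
    have fgw: "f (g w) \<in> carrier S" using assms(4) gw by auto
    have dfgw: "d (f (g w)) \<in> carrier T" using md fgw unfolding tree_morphism_def by auto
    have t1: "tle T (d (f (g w))) (g w)" using assms(6) gw unfolding is_injection_of_def by auto
    have t2: "tle V (e (d (f (g w)))) (e (g w))" by (rule morph_mono[OF assms(2,3) me dfgw gw t1])
    have t3: "tle V (e (g w)) w" using assms(7) w unfolding is_injection_of_def by auto
    have "e (d (f (g w))) \<in> carrier V" "e (g w) \<in> carrier V"
      using me dfgw gw unfolding tree_morphism_def by auto
    then show "tle V ((e \<circ> d) ((f \<circ> g) w)) w" unfolding o_def using tree_trans[OF tV _ _ w t2 t3] by blast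
  qed
  ultimately show ?thesis using morph_comp[OF md me] unfolding is_injection_of_def by blast
qed

theorem lemma2p2:
  fixes S :: "'s otree" and T :: "'t otree" and V :: "'v otree"
    and f :: "'t \<Rightarrow> 's" and g :: "'v \<Rightarrow> 't"
  assumes "ordered_tree S" and "ordered_tree T" and "ordered_tree V"
    and "rigid_surj f T S" and "rigid_surj g V T"
  shows "rigid_surj (f \<circ> g) V S \<and>
    (\<forall>d e. is_injection_of f T S d \<and> is_injection_of g V T e
       \<longrightarrow> is_injection_of (f \<circ> g) V S (e \<circ> d))"
proof -
  have hf: "\<forall>w\<in>carrier T. f w \<in> carrier S" and hg: "\<forall>w\<in>carrier V. g w \<in> carrier T"
    using assms(4,5) unfolding rigid_surj_def by auto
  have all: "\<forall>d e. is_injection_of f T S d \<and> is_injection_of g V T e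
       \<longrightarrow> is_injection_of (f \<circ> g) V S (e \<circ> d)"
    using inj_comp[OF assms(1-3) hf hg] by blast
  obtain d e where "is_injection_of f T S d" "is_injection_of g V T e"
    using assms(4,5) unfolding rigid_surj_def by blast
  then have "is_injection_of (f \<circ> g) V S (e \<circ> d)" using all by blast
  moreover have "\<forall>w\<in>carrier V. (f \<circ> g) w \<in> carrier S" using hf hg by auto
  ultimately show ?thesis using all unfolding rigid_surj_def by blast
qed

end
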